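(* For every integer $n\ge 3$, $A'_n\equiv 0\pmod{24}$.
   Context: For $m\in\mathbb{N}$, $A_m=\sum_{k=0}^m\binom{m}{k}^2\binom{m+k}{k}^2$ (Apéry numbers), and $A'_n=\sum_{k=0}^n\binom{n}{k}A_k$ is its binomial transform. *)

theory Defs
  imports Main
begin

definition apery :: "nat \<Rightarrow> nat" where
  "apery m = (\<Sum>k\<le>m. (m choose k)^2 * ((m + k) choose k)^2)"

definition apery_bt :: "nat \<Rightarrow> nat" where
  "apery_bt n = (\<Sum>k\<le>n. (n choose k) * apery k)"

end

theory Submission
  imports Defs "HOL-Number_Theory.Cong"
begin

lemma L1: "Suc (Suc (Suc n)) choose Suc (Suc (Suc r)) = (n choose r) + 3 * (n choose Suc r) + 3 * (n choose Suc (Suc r)) + (n choose Suc (Suc (Suc r)))"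
  by (simp only: binomial_Suc_Suc)
lemma L2: "(n+3) choose 2 = (n choose 2) + 3 * n + 3"
proof -
  have "n+3 = Suc (Suc (Suc n))" by simp
  then have "(n+3) choose 2 = Suc (Suc (Suc n)) choose 2" by (simp only:)
  also have "\<dots> = (n choose 2) + 3 * n + 3"
  by (simp only: binomial_Suc_Suc choose_one binomial_n_0 numeral_2_eq_2) simp
  finally show ?thesis .
qed

lemma pascal3: "[(n+3) choose q = (n choose q) + (if q \<ge> 3 then n choose (q-3) else 0)] (mod 3)"
proof (cases "q \<ge> 3")
  case True
  define r where "r = q - 3"
  have qr: "q = r + 3" using True by (simp add: r_def)
  have e1: "n + 3 = Suc (Suc (Suc n))" "r + 3 = Suc (Suc (Suc r))" by simp_all
  have "(n+3) choose q = (n choose r) + 3 * ((n choose Suc r) + (n choose Suc (Suc r))) + (n choose q)"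
    using L1[of n r] unfolding qr e1 by simp
  then have "(n+3) choose q = ((n choose q) + (n choose r)) + 3 * ((n choose Suc r) + (n choose Suc (Suc r)))"
    by simp
  then have "[(n+3) choose q = (n choose q) + (n choose r)] (mod 3)"
    by (simp only: cong_def mod_mult_self2)
  moreover have "q - 3 = r" using qr by simp
  ultimately show ?thesis using True by simp
next
  case False
  then have "q = 0 \<or> q = 1 \<or> q = 2" by auto
  moreover have "(n+3) choose 2 = (n choose 2) + 3 * n + 3"
    by (rule L2)
  ultimately show ?thesis using False unfolding cong_def by auto
qed

lemma lucas_base: "b < 3 \<Longrightarrow> [b choose q = (0 choose (q div 3)) * (b choose (q mod 3))] (mod 3)"
proof (cases "q < 3")
  case True then show ?thesis by simp
next
  case False
  assume b: "b < 3"
  have "q div 3 \<noteq> 0" using False by simp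
  then have "0 choose (q div 3) = 0" by simp
  moreover have "b choose q = 0" using b False by (simp add: binomial_eq_0)
  ultimately show ?thesis by (simp only: mult_zero_left cong_refl)
qed

lemma lucas_step_aux:
  assumes IH: "\<And>q. [n choose q = (a choose (q div 3)) * (b choose (q mod 3))] (mod 3)"
  shows "[(n+3) choose q = (Suc a choose (q div 3)) * (b choose (q mod 3))] (mod 3)"
proof (cases "q \<ge> 3")
  case True
  define r where "r = q - 3"
  have qr: "q = r + 3" using True by (simp add: r_def)
  have d: "r div 3 = q div 3 - 1" "r mod 3 = q mod 3" using qr by simp_all
  define c where "c = r div 3"
  have qc: "q div 3 = Suc c" using qr by (simp add: c_def)
  have "[(n+3) choose q = (n choose q) + (n choose r)] (mod 3)"
    using pascal3[of n q] True by (simp add: r_def)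
  also have "[(n choose q) + (n choose r) =
       (a choose (q div 3)) * (b choose (q mod 3)) + (a choose c) * (b choose (q mod 3))] (mod 3)"
    using cong_add[OF IH[of q] IH[of r]] d by (simp add: c_def)
  also have "(a choose (q div 3)) * (b choose (q mod 3)) + (a choose c) * (b choose (q mod 3))
        = (Suc a choose (q div 3)) * (b choose (q mod 3))"
    unfolding qc by (simp add: algebra_simps)
  finally show ?thesis .
next
  case False
  have "[(n+3) choose q = (n choose q)] (mod 3)"
    using pascal3[of n q] False by simp
  also have "[n choose q = (a choose (q div 3)) * (b choose (q mod 3))] (mod 3)"
    by (rule IH)
  also have "(a choose (q div 3)) = (Suc a choose (q div 3))" using False by simp
  finally show ?thesis .
qed

lemma lucas3: "b < 3 \<Longrightarrow> [(3*a+b) choose q = (a choose (q div 3)) * (b choose (q mod 3))] (mod 3)"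
proof (induction a arbitrary: q)
  case 0
  then show ?case using lucas_base[of b q] by simp
next
  case (Suc a)
  have e: "3 * Suc a + b = (3*a+b) + 3" by simp
  show ?case unfolding e by (rule lucas_step_aux) (rule Suc.IH[OF Suc.prems])
qed

lemma term3:
  assumes d: "d < 3" and e: "e < 3"
  shows "[((3*m+d) choose (3*i+e)) * ((3*m+d + (3*i+e)) choose (3*i+e))
          = ((m choose i)*((m+i) choose i)) * ((d choose e)*((d+e) choose e))] (mod 3)"
proof -
  have h1: "[(3*m+d) choose (3*i+e) = (m choose i)*(d choose e)] (mod 3)"
    using lucas3[OF d, of m "3*i+e"] e by simp
  show ?thesis
  proof (cases "d+e < 3")
    case True
    have "[(3*(m+i)+(d+e)) choose (3*i+e) = ((m+i) choose i)*((d+e) choose e)] (mod 3)"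
      using lucas3[OF True, of "m+i" "3*i+e"] e by simp
    moreover have eq: "3*m+d + (3*i+e) = 3*(m+i)+(d+e)" by simp
    ultimately have h2: "[(3*m+d + (3*i+e)) choose (3*i+e) = ((m+i) choose i)*((d+e) choose e)] (mod 3)"
      by (simp only: eq)
    from cong_mult[OF h1 h2] show ?thesis by (simp add: ac_simps)
  next
    case False
    have lt: "d+e-3 < 3" using d e by simp
    have "[(3*(m+i+1)+(d+e-3)) choose (3*i+e) = ((m+i+1) choose i)*((d+e-3) choose e)] (mod 3)"
      using lucas3[OF lt, of "m+i+1" "3*i+e"] e by simp
    moreover have eq: "3*m+d + (3*i+e) = 3*(m+i+1)+(d+e-3)" using False by simp
    moreover have "(d+e-3) choose e = 0" using d False by (simp add: binomial_eq_0)
    ultimately have h2: "[(3*m+d + (3*i+e)) choose (3*i+e) = 0] (mod 3)" by (simp only: eq mult_0_right)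
    have "d = 1 \<and> e = 2 \<or> d = 2 \<and> e = 1 \<or> d = 2 \<and> e = 2" using d e False by auto
    moreover have f: "(4::nat) choose 2 = 6" by code_simp
    ultimately have h3: "[(d choose e)*((d+e) choose e) = 0] (mod 3)"
      by (elim disjE conjE) (simp_all add: cong_def f binomial_eq_0)
    have "[((3*m+d) choose (3*i+e)) * ((3*m+d + (3*i+e)) choose (3*i+e)) = ((m choose i)*(d choose e)) * 0] (mod 3)"
      using cong_mult[OF h1 h2] .
    moreover have "[((m choose i)*((m+i) choose i)) * ((d choose e)*((d+e) choose e)) = ((m choose i)*((m+i) choose i)) * 0] (mod 3)"
      using cong_mult[OF cong_refl h3] .
    ultimately show ?thesis by (simp add: cong_def)
  qed
qed

lemma sum3: "(\<Sum>j<3*(N::nat). f j) = (\<Sum>i<N. f (3*i) + f (3*i+1) + f (3*i+2))"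
proof (induction N)
  case 0 then show ?case by simp
next
  case (Suc N)
  have e: "3 * Suc N = Suc (Suc (Suc (3*N)))" by simp
  show ?case unfolding e using Suc by (simp add: add.assoc)
qed

definition sterm :: "nat \<Rightarrow> nat \<Rightarrow> nat" where
  "sterm m k = (m choose k)^2 * ((m + k) choose k)^2"

lemma apery_lt: "apery m = (\<Sum>j<N. sterm m j)" if "m < N"
proof -
  have "apery m = (\<Sum>j\<le>m. sterm m j)" by (simp add: apery_def sterm_def)
  also have "\<dots> = (\<Sum>j<N. sterm m j)"
    by (rule sum.mono_neutral_left) (use that in \<open>auto simp: sterm_def binomial_eq_0\<close>)
  finally show ?thesis .
qed

lemma X1: assumes d: "d < (3::nat)" shows "apery (3*m+d) = (\<Sum>j<3*(m+1). sterm (3*m+d) j)"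
proof -
  have "3*m+d < 3*(m+1)" using d by simp
  then show ?thesis by (rule apery_lt)
qed
lemma X2: "(\<Sum>j<3*(m+1). sterm (3*m+d) j) = (\<Sum>i<m+1. sterm (3*m+d) (3*i) + sterm (3*m+d) (3*i+1) + sterm (3*m+d) (3*i+2))"
    by (rule sum3)
lemma X3: "apery m = (\<Sum>i<m+1. sterm m i)" 
proof -
    have "m < m+1" by simp
    then show ?thesis by (rule apery_lt)
qed

lemma sum_lt3: "(\<Sum>j<(3::nat). g j) = g 0 + g 1 + (g 2::nat)"
proof -
  have "{..<(3::nat)} = {0,1,2}" by auto
  then show ?thesis by simp
qed
lemma X4: assumes d: "d < (3::nat)" shows "(\<Sum>i<m+1. sterm m i * (sterm d 0 + sterm d 1 + sterm d 2)) = apery m * apery d"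
  proof -
    have B: "apery d = (\<Sum>j<3. sterm d j)" using d by (rule apery_lt)
    show ?thesis unfolding X3[of m] B sum_lt3 by (rule sum_distrib_right[symmetric])
  qed

lemma X5: assumes d: "d < (3::nat)" shows "[(\<Sum>i<m+1. sterm (3*m+d) (3*i) + sterm (3*m+d) (3*i+1) + sterm (3*m+d) (3*i+2)) = (\<Sum>i<m+1. sterm m i * (sterm d 0 + sterm d 1 + sterm d 2))] (mod 3)"
  proof (rule cong_sum)
    fix i
    have t: "[sterm (3*m+d) (3*i+e) = sterm m i * sterm d e] (mod 3)" if "e < 3" for e
    proof -
      have "[(((3*m+d) choose (3*i+e)) * ((3*m+d + (3*i+e)) choose (3*i+e)))^2
          = (((m choose i)*((m+i) choose i)) * ((d choose e)*((d+e) choose e)))^2] (mod 3)"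
        by (rule cong_pow[OF term3[OF d that]])
      then show ?thesis unfolding sterm_def power_mult_distrib by (simp only: ac_simps)
    qed
    have t0: "[sterm (3*m+d) (3*i) = sterm m i * sterm d 0] (mod 3)" using t[of 0] by simp
    have t2: "[sterm (3*m+d) (3*i+2) = sterm m i * sterm d 2] (mod 3)" using t[of 2] by simp
    have t1: "[sterm (3*m+d) (3*i+1) = sterm m i * sterm d 1] (mod 3)" using t[of 1] by simp
    have "[sterm (3*m+d) (3*i) + sterm (3*m+d) (3*i+1) + sterm (3*m+d) (3*i+2)
       = sterm m i * sterm d 0 + sterm m i * sterm d 1 + sterm m i * sterm d 2] (mod 3)"
      by (rule cong_add[OF cong_add[OF t0 t1] t2])
    then show "[sterm (3*m+d) (3*i) + sterm (3*m+d) (3*i+1) + sterm (3*m+d) (3*i+2)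
       = sterm m i * (sterm d 0 + sterm d 1 + sterm d 2)] (mod 3)"
      by (simp only: distrib_left)
  qed

lemma apery_mult3:
  assumes d: "d < 3"
  shows "[apery (3*m+d) = apery m * apery d] (mod 3)"
  using X5[OF d, of m] unfolding X4[OF d] X2[symmetric] X1[OF d, symmetric] .

lemma apery_small: "apery 0 = 1" "apery 1 = 5" "apery (Suc 0) = 5" "apery 2 = 73"
  by (simp_all add: apery_def eval_nat_numeral)

lemma apery_mod3: "[apery k = (if even k then 1 else 2)] (mod 3)"
proof (induction k rule: less_induct)
  case (less k)
  show ?case
  proof (cases "k < 3")
    case True
    then have "k = 0 \<or> k = 1 \<or> k = 2" by auto
    then show ?thesis by (auto simp: apery_small cong_def)
  next
    case False
    define m where "m = k div 3"
    define d where "d = k mod 3"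
    have k: "k = 3*m+d" by (simp add: m_def d_def)
    have d3: "d < 3" by (simp add: d_def)
    have mk: "m < k" using False by (simp add: m_def)
    have c1: "[apery k = apery m * apery d] (mod 3)" using apery_mult3[OF d3, of m] k by simp
    have c2: "[apery m * apery d = (if even m then 1 else 2) * (if even d then 1 else 2)] (mod 3)"
      by (rule cong_mult[OF less.IH[OF mk] less.IH]) (use mk d3 k False in auto)
    have par: "even k \<longleftrightarrow> (even m \<longleftrightarrow> even d)" using k by auto
    have c3: "[(if even m then 1 else 2) * (if even d then 1 else 2) = (if even k then 1 else (2::nat))] (mod 3)"
      using par by (auto simp: cong_def)
    show ?thesis using cong_trans[OF cong_trans[OF c1 c2] c3] .
  qed
qed

lemma even_central: "j \<ge> 1 \<Longrightarrow> 2 dvd ((2*j) choose j)"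
proof -
  assume j: "j \<ge> 1"
  obtain c where c: "j = Suc c" using j by (cases j) auto
  have "2*j = Suc (2*c+1)" using c by simp
  then have "(2*j) choose j = ((2*c+1) choose c) + ((2*c+1) choose Suc c)" using c by simp
  moreover have "(2*c+1) choose Suc c = (2*c+1) choose c"
    using binomial_symmetric[of "Suc c" "2*c+1"] by simp
  ultimately show ?thesis by simp
qed

lemma even_b: "j \<ge> 1 \<Longrightarrow> 2 dvd ((k choose j) * ((k+j) choose j))"
proof (cases "j \<le> k")
  case True
  assume j: "j \<ge> 1"
  have "((k+j) choose (2*j)) * ((2*j) choose j) = ((k+j) choose j) * ((k+j-j) choose (2*j-j))"
    by (rule choose_mult) (use True in auto)
  then have "(k choose j) * ((k+j) choose j) = ((k+j) choose (2*j)) * ((2*j) choose j)" by simp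
  then show ?thesis using even_central[OF j] by simp
next
  case False
  then show ?thesis by (simp add: binomial_eq_0)
qed

definition Del :: "nat \<Rightarrow> nat" where
  "Del k = (\<Sum>j\<le>k. (k choose j) * ((k+j) choose j))"

lemma apery_mod8a: "[int (apery k) = 2 * int (Del k) - 1] (mod 8)"
proof -
  define b where "b j = int ((k choose j) * ((k+j) choose j))" for j
  have "int (apery k) = (\<Sum>j\<le>k. (b j)^2)"
    by (simp add: apery_def b_def power_mult_distrib)
  moreover have "2 * int (Del k) - 1 = (\<Sum>j\<le>k. 2 * b j) - (\<Sum>j\<le>k. (if j = 0 then 1 else 0))"
    by (simp add: Del_def b_def sum_distrib_left)
  moreover have "8 dvd (\<Sum>j\<le>k. (b j)^2 - 2 * b j + (if j = 0 then 1 else 0))"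
  proof (rule dvd_sum)
    fix j assume "j \<in> {..k}"
    show "8 dvd (b j)^2 - 2 * b j + (if j = 0 then 1 else 0)"
    proof (cases "j = 0")
      case True then show ?thesis by (simp add: b_def)
    next
      case False
      have "2 dvd (k choose j) * ((k+j) choose j)" using even_b[of j k] False by simp
      then have "even (b j)" unfolding b_def by simp
      then obtain c where c: "b j = 2 * c" by (rule evenE)
      have "even (c * (c - 1))" by auto
      then obtain t where "c * (c - 1) = 2 * t" by (rule evenE)
      then have "(b j)^2 - 2 * b j = 8 * t" using c by (simp add: power2_eq_square algebra_simps)
      then show ?thesis using False by simp
    qed
  qed
  ultimately show ?thesis
    by (simp add: cong_iff_dvd_diff sum.distrib sum_subtractf algebra_simps)
qed

lemma vand_j: "j \<le> k \<Longrightarrow> (k+j) choose j = (\<Sum>i\<le>k. (k choose i) * (j choose i))"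
proof -
  assume jk: "j \<le> k"
  have "(k+j) choose j = (\<Sum>i\<le>j. (k choose i) * (j choose (j - i)))"
    using vandermonde[of k j j] by simp
  also have "\<dots> = (\<Sum>i\<le>j. (k choose i) * (j choose i))"
  proof (rule sum.cong)
    fix i assume "i \<in> {..j}"
    then show "(k choose i) * (j choose (j - i)) = (k choose i) * (j choose i)"
      using binomial_symmetric[of i j] by simp
  qed simp
  also have "\<dots> = (\<Sum>i\<le>k. (k choose i) * (j choose i))"
    by (rule sum.mono_neutral_left) (use jk in auto)
  finally show ?thesis .
qed

lemma inner_sum: "i \<le> k \<Longrightarrow> (\<Sum>j\<le>k. (k choose j) * (j choose i)) = (k choose i) * 2^(k-i)"
proof -
  assume ik: "i \<le> k"
  have "(\<Sum>j\<le>k. (k choose j) * (j choose i)) = (\<Sum>j\<in>{i..k}. (k choose j) * (j choose i))"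
    by (rule sum.mono_neutral_right) auto
  also have "\<dots> = (\<Sum>j\<in>{i..k}. (k choose i) * ((k-i) choose (j-i)))"
    by (rule sum.cong) (auto simp: choose_mult)
  also have "\<dots> = (k choose i) * (\<Sum>j\<in>{i..k}. ((k-i) choose (j-i)))"
    by (simp add: sum_distrib_left)
  also have "(\<Sum>j\<in>{i..k}. ((k-i) choose (j-i))) = (\<Sum>t\<in>{0..k-i}. ((k-i) choose t))"
    using sum.atLeastAtMost_shift_0[OF ik, of "\<lambda>j. (k-i) choose (j-i)"] by (simp add: comp_def)
  also have "\<dots> = 2^(k-i)" using choose_row_sum[of "k-i"] by (simp add: atLeast0AtMost)
  finally show ?thesis .
qed

lemma Del_eq: "Del k = (\<Sum>i\<le>k. (k choose i)^2 * 2^(k-i))"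
proof -
  have "Del k = (\<Sum>j\<le>k. (k choose j) * (\<Sum>i\<le>k. (k choose i) * (j choose i)))"
    unfolding Del_def by (rule sum.cong) (auto simp: vand_j)
  also have "\<dots> = (\<Sum>j\<le>k. \<Sum>i\<le>k. (k choose i) * ((k choose j) * (j choose i)))"
    by (simp add: sum_distrib_left ac_simps)
  also have "\<dots> = (\<Sum>i\<le>k. \<Sum>j\<le>k. (k choose i) * ((k choose j) * (j choose i)))"
    by (rule sum.swap)
  also have "\<dots> = (\<Sum>i\<le>k. (k choose i) * (\<Sum>j\<le>k. (k choose j) * (j choose i)))"
    by (simp add: sum_distrib_left)
  also have "\<dots> = (\<Sum>i\<le>k. (k choose i)^2 * 2^(k-i))"
    by (rule sum.cong) (auto simp: inner_sum power2_eq_square)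
  finally show ?thesis .
qed

lemma Del_mod4: "\<exists>t. Del k = 1 + 2*k^2 + 4*t"
proof (cases k)
  case 0 then show ?thesis by (simp add: Del_def)
next
  case (Suc m)
  define f where "f i = (Suc m choose i)^2 * 2^(Suc m - i)" for i
  have "Del k = (\<Sum>i<m. f i) + f m + f (Suc m)"
    unfolding Del_eq Suc f_def by (simp add: lessThan_Suc_atMost[symmetric])
  moreover have "4 dvd (\<Sum>i<m. f i)"
  proof (rule dvd_sum)
    fix i assume "i \<in> {..<m}"
    then have "2 \<le> Suc m - i" by auto
    then have "(2::nat)^2 dvd 2^(Suc m - i)" by (rule le_imp_power_dvd)
    then show "4 dvd f i" unfolding f_def by simp
  qed
  moreover have "f m = 2 * k^2" "f (Suc m) = 1" using Suc by (simp_all add: f_def)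
  ultimately show ?thesis by (auto elim!: dvdE simp: algebra_simps)
qed

lemma apery_mod8: "8 dvd int (apery k) - (if even k then 1 else 5)"
proof -
  obtain t where t: "Del k = 1 + 2*k^2 + 4*t" using Del_mod4 by blast
  have "8 dvd int (apery k) - (2 * int (Del k) - 1)"
    using apery_mod8a[of k] by (simp add: cong_iff_dvd_diff)
  then have h: "8 dvd int (apery k) - 1 - 4 * int k^2 - 8 * int t"
    unfolding t by (simp add: algebra_simps)
  have h2: "8 dvd 4 * int k ^ 2 - (if even k then 0 else 4)"
  proof (cases "even k")
    case True
    then obtain u where "k = 2*u" by (rule evenE)
    then show ?thesis using True by (simp add: power2_eq_square)
  next
    case False
    then obtain u where u: "k = 2*u+1" by (rule oddE)
    have "4 * int k ^ 2 - 4 = 8 * (2 * int u * int u + 2 * int u)"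
      unfolding u by (simp add: power2_eq_square algebra_simps)
    then show ?thesis using False by simp
  qed
  have "8 dvd (int (apery k) - 1 - 4 * int k^2 - 8 * int t) + (4 * int k ^ 2 - (if even k then 0 else 4)) + 8 * int t"
    using h h2 by (intro dvd_add) simp_all
  then show ?thesis by (auto simp: algebra_simps split: if_splits)
qed

lemma apery_mod24: "24 dvd int (apery k) - (if even k then 1 else 5)"
proof -
  have "[int (apery k) = int (if even k then 1 else 2)] (mod int 3)"
    by (simp only: cong_int_iff) (rule apery_mod3)
  then have c: "int 3 dvd int (apery k) - int (if even k then 1 else 2)"
    by (simp only: cong_iff_dvd_diff)
  have h3: "3 dvd int (apery k) - (if even k then 1 else 5)"
  proof (cases "even k")
    case True then show ?thesis using c by simp
  next
    case False
    then have "3 dvd int (apery k) - 2" using c by simp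
    then show ?thesis using False by presburger
  qed
  have h8: "8 dvd int (apery k) - (if even k then 1 else 5)" by (rule apery_mod8)
  from h3 h8 show ?thesis by presburger
qed

theorem lemma4p2:
  fixes n :: nat
  assumes "n \<ge> 3"
  shows "(24::nat) dvd apery_bt n"
proof -
  define g :: "nat \<Rightarrow> int" where "g k = (if even k then 1 else 5)" for k
  have gk: "g k = 3 - 2 * (-1)^k" for k by (simp add: g_def)
  have "int (apery_bt n) = (\<Sum>k\<le>n. int (n choose k) * (int (apery k) - g k)) + 3 * (\<Sum>k\<le>n. int (n choose k))
        - 2 * (\<Sum>k\<le>n. (-1)^k * int (n choose k))"
    unfolding apery_bt_def gk by (simp add: algebra_simps sum_distrib_left sum_subtractf sum.distrib)
  moreover have "(\<Sum>k\<le>n. (-1)^k * int (n choose k)) = 0"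
    using choose_alternating_sum[of n] assms by simp
  moreover have "(\<Sum>k\<le>n. int (n choose k)) = 2^n"
    using choose_row_sum[of n] by (metis of_nat_numeral of_nat_power of_nat_sum)
  moreover have "24 dvd (\<Sum>k\<le>n. int (n choose k) * (int (apery k) - g k))"
    by (rule dvd_sum) (use apery_mod24 in \<open>simp add: g_def\<close>)
  moreover have "(24::int) dvd 3 * 2^n"
  proof -
    define r where "r = n - 3"
    have nr: "n = 3 + r" using assms by (simp add: r_def)
    have "(2::int)^n = 2^3 * 2^r" unfolding nr by (simp only: power_add)
    then show ?thesis by simp
  qed
  ultimately have "(24::int) dvd int (apery_bt n)" by simp
  then show ?thesis by presburger
qed

end
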